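(* Let $H_1,\dots,H_n$ be null hypotheses indexed by $\mathcal V=\{1,\dots,n\}$ with $p$-values $p_1,\dots,p_n$ that are marginally uniform on $[0,1]$ under the null; let $\bar{\mathcal S}=\{v:H_v\text{ true}\}$. Let $\mathcal G$ be a directed acyclic graph on $\mathcal V$ such that if $H_v$ is false then $H_w$ is false for every ancestor $w$ of $v$, and let $\mathcal C_v$ be $v$ together with its descendants. Let $Z_v=\Phi^{-1}(p_v)$, where $\Phi$ is the standard normal CDF, and assume $Z_{\bar{\mathcal S}}\sim\mathcal N(0,R)$ for some correlation matrix $R$. For weights $\pi_{vw}\ge0$ with $\sum_{w\in\mathcal C_v}\pi_{vw}=1$, define \[\tilde p_v=\begin{cases}1 & \text{if }\sum_{w\in\mathcal C_v}\pi_{vw}Z_w\ge0,\\ \Phi\big(\sum_{w\in\mathcal C_v}\pi_{vw}Z_w\big)&\text{otherwise.}\end{cases}\] Then $\Pr(\tilde p_v\le\alpha)\le\alpha$ for all $\alpha\in[0,1]$ and all $v\in\bar{\mathcal S}$. *)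

theory Defs
  imports "HOL-Probability.Probability"
begin

text \<open>Standard normal CDF and its inverse (on (0,1); values outside are irrelevant).\<close>
definition Phi :: "real \<Rightarrow> real" where
  "Phi x = (LINT t:{..x}|lborel. std_normal_density t)"

definition Phi_inv :: "real \<Rightarrow> real" where
  "Phi_inv q = (THE z. Phi z = q)"

definition desc_closed :: "(nat \<times> nat) set \<Rightarrow> nat \<Rightarrow> nat set" where
  "desc_closed E v = {v} \<union> {w. (v, w) \<in> E\<^sup>+}"

text \<open>Z restricted to the index set S is a centred Gaussian vector with covariance R:
  every linear combination is N(0, c^T R c) (degenerate at 0 when the variance is 0).\<close>
definition centered_gaussian_vector ::
  "'a measure \<Rightarrow> (nat \<Rightarrow> 'a \<Rightarrow> real) \<Rightarrow> nat set \<Rightarrow> (nat \<Rightarrow> nat \<Rightarrow> real) \<Rightarrow> bool" where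
  "centered_gaussian_vector M Z S R \<longleftrightarrow>
     (\<forall>c :: nat \<Rightarrow> real.
        let Y = (\<lambda>x. \<Sum>w\<in>S. c w * Z w x);
            s = (\<Sum>v\<in>S. \<Sum>w\<in>S. c v * c w * R v w)
        in (s > 0 \<longrightarrow> distributed M lborel Y (normal_density 0 (sqrt s)))
         \<and> (s = 0 \<longrightarrow> Y \<in> borel_measurable M \<and> (AE x in M. Y x = 0)))"

definition correlation_matrix :: "nat set \<Rightarrow> (nat \<Rightarrow> nat \<Rightarrow> real) \<Rightarrow> bool" where
  "correlation_matrix S R \<longleftrightarrow>
     (\<forall>v\<in>S. R v v = 1) \<and> (\<forall>v\<in>S. \<forall>w\<in>S. R v w = R w v) \<and>
     (\<forall>c :: nat \<Rightarrow> real. (\<Sum>v\<in>S. \<Sum>w\<in>S. c v * c w * R v w) \<ge> 0)"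

definition ptilde ::
  "(nat \<times> nat) set \<Rightarrow> (nat \<Rightarrow> nat \<Rightarrow> real) \<Rightarrow> (nat \<Rightarrow> 'a \<Rightarrow> real) \<Rightarrow> nat \<Rightarrow> 'a \<Rightarrow> real" where
  "ptilde E \<pi> Z v x =
     (let s = (\<Sum>w\<in>desc_closed E v. \<pi> v w * Z w x) in if s \<ge> 0 then 1 else Phi s)"

end

theory Submission
  imports Defs
begin

lemma std_le1: "std_normal_density t \<le> 1"
proof -
  have "exp (- t\<^sup>2 / 2) \<le> 1" by simp
  moreover have "1 / sqrt (2 * pi) \<le> 1" using pi_gt3 by (simp add: real_le_rsqrt)
  moreover have "1 \<le> sqrt (2 * pi)" using pi_gt3 by simp
  ultimately have "exp (- t\<^sup>2 / 2) \<le> sqrt (2 * pi)" by linarith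
  then show ?thesis unfolding std_normal_density_def
    by (simp add: field_simps)
qed

lemma std_set_int: "A \<in> sets borel \<Longrightarrow> set_integrable lborel A std_normal_density"
  unfolding set_integrable_def
  by (rule integrable_mult_indicator[OF _ integrable_normal_density]) auto

lemma Phi_split:
  assumes "x \<le> y"
  shows "Phi y = Phi x + (LINT t:{x<..y}|lborel. std_normal_density t)"
proof -
  have "{..y} = {..x} \<union> {x<..y}" using assms by auto
  then show ?thesis unfolding Phi_def
    by (simp, intro set_integral_Un) (auto intro: std_set_int)
qed

lemma Phi_mono: "x \<le> y \<Longrightarrow> Phi x \<le> Phi y"
  using Phi_split[of x y] Bochner_Integration.integral_nonneg[of lborel "\<lambda>t. indicator {x<..y} t * std_normal_density t"]
  by (simp add: set_lebesgue_integral_def)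

lemma Phi_lip: "x \<le> y \<Longrightarrow> Phi y \<le> Phi x + (y - x)"
proof -
  assume xy: "x \<le> y"
  have "(LINT t:{x<..y}|lborel. std_normal_density t) \<le> (LINT t:{x<..y}|lborel. 1)"
  proof (rule set_integral_mono)
    have "emeasure lborel {x<..y} < \<top>" using xy by simp
    then show "set_integrable lborel {x<..y} (\<lambda>t. 1::real)"
      by (simp add: set_integrable_def)
  qed (use std_set_int std_le1 in auto)
  also have "\<dots> = y - x" using xy by (simp add: set_lebesgue_integral_def)
  finally show ?thesis using Phi_split[OF xy] by simp
qed

lemma Phi_dist:
  assumes M: "prob_space M" and Y: "distributed M lborel Y std_normal_density"
  shows "measure M {x\<in>space M. Y x \<le> t} = Phi t"
proof -
  have "(\<integral>x. std_normal_density x * indicator {..t} x \<partial>lborel) = (\<integral>x. indicator {..t} (Y x) \<partial>M)"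
    by (rule distributed_integral[OF Y]) auto
  also have "\<dots> = (\<integral>x. indicator (Y -` {..t} \<inter> space M) x \<partial>M)"
    by (rule Bochner_Integration.integral_cong) (auto simp: indicator_def)
  also have "\<dots> = measure M (Y -` {..t} \<inter> space M)"
    by (simp add: Int_assoc)
  also have "Y -` {..t} \<inter> space M = {x\<in>space M. Y x \<le> t}" by auto
  finally show ?thesis unfolding Phi_def set_lebesgue_integral_def
    by (simp add: mult.commute)
qed

lemma key_std:
  assumes M: "prob_space M" and Y: "distributed M lborel Y std_normal_density"
    and A: "A \<subseteq> space M" "\<And>x. x \<in> A \<Longrightarrow> Y x < 0 \<and> Phi (Y x) \<le> \<alpha>"
    and a0: "0 \<le> \<alpha>"
  shows "measure M A \<le> \<alpha>"
proof (cases "A = {}")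
  case True then show ?thesis using a0 by simp
next
  case False
  define B where "B = {y. y < 0 \<and> Phi y \<le> \<alpha>}"
  have Bne: "B \<noteq> {}" using False A unfolding B_def by blast
  have Bbdd: "bdd_above B" unfolding B_def by (rule bdd_aboveI[of _ 0]) auto
  define z where "z = Sup B"
  have Phiz: "Phi z \<le> \<alpha>"
  proof (rule field_le_epsilon)
    fix e :: real assume e: "0 < e"
    have "z - e < z" using e by simp
    then obtain y where y: "y \<in> B" "z - e < y" unfolding z_def
      using less_cSupE[OF _ Bne] by blast
    have "y \<le> z" unfolding z_def using cSup_upper[OF y(1) Bbdd] .
    then have "Phi z \<le> Phi y + (z - y)" by (rule Phi_lip)
    then show "Phi z \<le> \<alpha> + e" using y unfolding B_def by auto
  qed
  have Ymeas: "Y \<in> borel_measurable M" using distributed_measurable[OF Y] by simp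
  have sub: "A \<subseteq> {x\<in>space M. Y x \<le> z}"
  proof
    fix x assume x: "x \<in> A"
    then have "Y x \<in> B" using A unfolding B_def by auto
    then show "x \<in> {x\<in>space M. Y x \<le> z}" using x A(1) cSup_upper[OF _ Bbdd] unfolding z_def by auto
  qed
  have "measure M A \<le> measure M {x\<in>space M. Y x \<le> z}"
    by (rule finite_measure.finite_measure_mono[OF prob_space.finite_measure[OF M] sub]) (use Ymeas in measurable)
  also have "\<dots> = Phi z" by (rule Phi_dist[OF M Y])
  finally show ?thesis using Phiz by simp
qed

lemma key_normal:
  assumes M: "prob_space M" and S: "distributed M lborel S (normal_density 0 \<sigma>)"
    and sig: "0 < \<sigma>" "\<sigma> \<le> 1"
    and A: "A \<subseteq> space M" "\<And>x. x \<in> A \<Longrightarrow> S x < 0 \<and> Phi (S x) \<le> \<alpha>"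
    and a0: "0 \<le> \<alpha>"
  shows "measure M A \<le> \<alpha>"
proof (rule key_std[OF M _ A(1) _ a0])
  show "distributed M lborel (\<lambda>x. S x / \<sigma>) std_normal_density"
    using prob_space.normal_standard_normal_convert[OF M sig(1), of S 0] S by simp
  fix x assume x: "x \<in> A"
  have neg: "S x < 0" and P: "Phi (S x) \<le> \<alpha>" using A(2)[OF x] by auto
  have "S x / \<sigma> \<le> S x"
  proof -
    have "S x \<le> S x * \<sigma>" using neg sig by (simp add: mult_le_cancel_left1)
    then show ?thesis using sig by (simp add: divide_le_eq)
  qed
  moreover have "S x / \<sigma> < 0" using neg sig by (simp add: divide_neg_pos)
  ultimately show "S x / \<sigma> < 0 \<and> Phi (S x / \<sigma>) \<le> \<alpha>"
    using Phi_mono[of "S x / \<sigma>" "S x"] P by simp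
qed

lemma sum_two:
  fixes g :: "nat \<Rightarrow> real"
  assumes "finite S" "a \<in> S" "b \<in> S" "a \<noteq> b"
  shows "(\<Sum>w\<in>S. (if w = a then 1 else if w = b then -1 else 0) * g w) = g a - g b"
proof -
  have "(\<Sum>w\<in>S. (if w = a then 1 else if w = b then -1 else 0) * g w)
      = (\<Sum>w\<in>S. (if w = a then g w else 0) - (if w = b then g w else 0))"
    using assms(4) by (intro sum.cong) auto
  also have "\<dots> = g a - g b" using assms by (simp add: sum_subtractf)
  finally show ?thesis .
qed

lemma R_le1:
  assumes "finite S" "correlation_matrix S R" "a \<in> S" "b \<in> S"
  shows "R a b \<le> 1"
proof (cases "a = b")
  case True then show ?thesis using assms unfolding correlation_matrix_def by simp
next
  case False
  define d :: "nat \<Rightarrow> real" where "d = (\<lambda>u. if u = a then 1 else if u = b then -1 else 0)"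
  have "0 \<le> (\<Sum>v\<in>S. \<Sum>w\<in>S. d v * d w * R v w)" using assms(2) unfolding correlation_matrix_def by blast
  also have "\<dots> = (\<Sum>v\<in>S. d v * (\<Sum>w\<in>S. d w * R v w))"
    by (simp add: sum_distrib_left mult.assoc)
  also have "\<dots> = (\<Sum>v\<in>S. d v * (R v a - R v b))"
    unfolding d_def using sum_two[OF assms(1,3,4) False] by simp
  also have "\<dots> = (R a a - R a b) - (R b a - R b b)"
    unfolding d_def using sum_two[OF assms(1,3,4) False, of "\<lambda>v. R v a - R v b"] by simp
  also have "\<dots> = 2 - 2 * R a b" using assms unfolding correlation_matrix_def by simp
  finally show ?thesis by simp
qed
theorem lemma2:
  fixes M :: "'a measure" and n :: nat
    and p :: "nat \<Rightarrow> 'a \<Rightarrow> real"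
    and Snull :: "nat set"
    and E :: "(nat \<times> nat) set"
    and R :: "nat \<Rightarrow> nat \<Rightarrow> real"
    and \<pi> :: "nat \<Rightarrow> nat \<Rightarrow> real"
  assumes M: "prob_space M"
    and p_meas: "\<And>v. v \<in> {1..n} \<Longrightarrow> p v \<in> borel_measurable M"
    and p_unif: "\<And>v. v \<in> Snull \<Longrightarrow> distributed M lborel (p v) (\<lambda>t. ennreal (indicator {0..1} t))"
    and Snull_sub: "Snull \<subseteq> {1..n}"
    and E_sub: "E \<subseteq> {1..n} \<times> {1..n}"
    and dag: "acyclic E"
    and anc: "\<And>v w. v \<in> {1..n} \<Longrightarrow> v \<notin> Snull \<Longrightarrow> (w, v) \<in> E\<^sup>+ \<Longrightarrow> w \<notin> Snull"
    and R: "correlation_matrix Snull R"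
    and gauss: "centered_gaussian_vector M (\<lambda>v x. Phi_inv (p v x)) Snull R"
    and \<pi>_nonneg: "\<And>v w. v \<in> {1..n} \<Longrightarrow> w \<in> desc_closed E v \<Longrightarrow> \<pi> v w \<ge> 0"
    and \<pi>_sum: "\<And>v. v \<in> {1..n} \<Longrightarrow> (\<Sum>w\<in>desc_closed E v. \<pi> v w) = 1"
  shows "\<forall>\<alpha>\<in>{0..1}. \<forall>v\<in>Snull.
           measure M {x \<in> space M. ptilde E \<pi> (\<lambda>w x. Phi_inv (p w x)) v x \<le> \<alpha>} \<le> \<alpha>"
proof (intro ballI)
  fix \<alpha> :: real and v assume a: "\<alpha> \<in> {0..1}" and v: "v \<in> Snull"
  define Z where "Z = (\<lambda>w x. Phi_inv (p w x))"
  define C where "C = desc_closed E v"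
  define Ev where "Ev = {x \<in> space M. ptilde E \<pi> Z v x \<le> \<alpha>}"
  have vn: "v \<in> {1..n}" using v Snull_sub by auto
  have finS: "finite Snull" using Snull_sub finite_subset by blast
  have CS: "C \<subseteq> Snull"
  proof
    fix w assume "w \<in> C"
    then have "w = v \<or> (v, w) \<in> E\<^sup>+" unfolding C_def desc_closed_def by auto
    then show "w \<in> Snull"
    proof
      assume vw: "(v, w) \<in> E\<^sup>+"
      have "w \<in> {1..n}" using vw E_sub by (cases rule: tranclE) auto
      then show "w \<in> Snull" using anc[of w v] vw v by blast
    qed (use v in simp)
  qed
  define c where "c = (\<lambda>w. if w \<in> C then \<pi> v w else 0)"
  define Y where "Y = (\<lambda>x. \<Sum>w\<in>Snull. c w * Z w x)"
  define s where "s = (\<Sum>a\<in>Snull. \<Sum>b\<in>Snull. c a * c b * R a b)"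
  have Yeq: "Y x = (\<Sum>w\<in>C. \<pi> v w * Z w x)" for x
  proof -
    have "Y x = (\<Sum>w\<in>Snull. if w \<in> C then \<pi> v w * Z w x else 0)"
      unfolding Y_def c_def by (intro sum.cong) auto
    also have "\<dots> = (\<Sum>w\<in>Snull \<inter> C. \<pi> v w * Z w x)" using finS by (simp add: sum.inter_restrict)
    also have "Snull \<inter> C = C" using CS by auto
    finally show ?thesis .
  qed
  have c0: "0 \<le> c w" for w unfolding c_def C_def using \<pi>_nonneg[OF vn] by auto
  have csum: "(\<Sum>w\<in>Snull. c w) = 1"
  proof -
    have "(\<Sum>w\<in>Snull. c w) = (\<Sum>w\<in>Snull \<inter> C. \<pi> v w)" unfolding c_def using finS
      by (simp add: sum.inter_restrict[symmetric])
    also have "Snull \<inter> C = C" using CS by auto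
    finally show ?thesis using \<pi>_sum[OF vn] unfolding C_def by simp
  qed
  have s0: "0 \<le> s" using R unfolding correlation_matrix_def s_def by blast
  have s1: "s \<le> 1"
  proof -
    have "s \<le> (\<Sum>a\<in>Snull. \<Sum>b\<in>Snull. c a * c b)"
      unfolding s_def
    proof (intro sum_mono)
      fix a b assume "a \<in> Snull" "b \<in> Snull"
      then have "R a b \<le> 1" using R_le1[OF finS R] by blast
      then show "c a * c b * R a b \<le> c a * c b"
        using c0[of a] c0[of b] by (simp add: mult_left_le)
    qed
    also have "\<dots> = (\<Sum>a\<in>Snull. c a) * (\<Sum>b\<in>Snull. c b)"
      by (simp add: sum_product)
    finally show ?thesis using csum by simp
  qed
  have G: "(s > 0 \<longrightarrow> distributed M lborel Y (normal_density 0 (sqrt s)))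
         \<and> (s = 0 \<longrightarrow> Y \<in> borel_measurable M \<and> (AE x in M. Y x = 0))"
    using gauss unfolding centered_gaussian_vector_def Let_def Y_def s_def Z_def
    by (erule_tac x=c in allE) simp
  have pt: "ptilde E \<pi> Z v x = (if Y x \<ge> 0 then 1 else Phi (Y x))" for x
    unfolding ptilde_def Let_def Yeq C_def ..
  show "measure M {x \<in> space M. ptilde E \<pi> (\<lambda>w x. Phi_inv (p w x)) v x \<le> \<alpha>} \<le> \<alpha>"
    unfolding Z_def[symmetric] Ev_def[symmetric]
  proof (cases "\<alpha> = 1")
    case True
    then show "measure M Ev \<le> \<alpha>" using prob_space.prob_le_1[OF M] by simp
  next
    case False
    then have a1: "\<alpha> < 1" using a by auto
    have EvY: "x \<in> Ev \<Longrightarrow> Y x < 0 \<and> Phi (Y x) \<le> \<alpha>" for x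
      unfolding Ev_def using pt[of x] a1 by (auto split: if_splits)
    show "measure M Ev \<le> \<alpha>"
    proof (cases "s = 0")
      case False
      then have sp: "s > 0" using s0 by simp
      show ?thesis
        apply (rule key_normal[OF M _ _ _ _ EvY, where \<sigma>="sqrt s"])
        using G sp s1 a by (auto simp: Ev_def real_sqrt_le_1_iff)
    next
      case True
      then have "AE x in M. Y x = 0" using G by simp
      then obtain N where N: "N \<in> null_sets M" "{x\<in>space M. \<not> Y x = 0} \<subseteq> N"
      proof -
        from \<open>AE x in M. Y x = 0\<close> obtain N where "{x \<in> space M. \<not> Y x = 0} \<subseteq> N" "emeasure M N = 0" "N \<in> sets M"
          by (rule AE_E)
        then show ?thesis using that by blast
      qed
      have "Ev \<subseteq> N" using N(2) EvY unfolding Ev_def by fastforce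
      then have "measure M Ev \<le> measure M N"
        by (rule finite_measure.finite_measure_mono[OF prob_space.finite_measure[OF M]]) (use N in auto)
      also have "\<dots> = 0" using N by (simp add: measure_eq_0_null_sets)
      finally show ?thesis using a by simp
    qed
  qed
qed

end
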